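(* Let $A$, $B$ and $\psi$ be complex $D\times D$ matrices, where $\psi=\mathrm{diag}(\mu_1,\dots,\mu_D)$ is diagonal with $0\le\mu_1\le\mu_2\le\dots\le\mu_D$. For $1\le n\le D$ let $\psi_n=\mathrm{diag}(\mu_1,\dots,\mu_n,0,\dots,0)$. Then $$\chi_n(A\psi BB^\dagger\psi^\dagger A^\dagger)\le\mathrm{Tr}(A\psi_nBB^\dagger\psi_n^\dagger A^\dagger).$$
   Context: For a Hermitian $D\times D$ matrix $T$, $\chi_n(T)$ denotes the sum of its $n$ smallest eigenvalues counted with multiplicity. *)

theory Defs
  imports "Jordan_Normal_Form.Schur_Decomposition" "HOL-Library.Multiset"
begin

definition eigenvalues_mset :: "complex mat \<Rightarrow> complex multiset" where
  "eigenvalues_mset T = proots (char_poly T)"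

text \<open>chi_n(T): sum of the n smallest eigenvalues of a Hermitian matrix T
  (counted with multiplicity; the eigenvalues are real, so we take real parts).\<close>
definition chi :: "nat \<Rightarrow> complex mat \<Rightarrow> real" where
  "chi n T = sum_list (take n (sorted_list_of_multiset (image_mset Re (eigenvalues_mset T))))"

text \<open>diag(d_0, ..., d_{D-1}) as a D x D complex matrix (0-based indices).\<close>
definition diagm :: "nat \<Rightarrow> (nat \<Rightarrow> complex) \<Rightarrow> complex mat" where
  "diagm D d = mat D D (\<lambda>(i, j). if i = j then d i else 0)"

definition mtrace :: "complex mat \<Rightarrow> complex" where
  "mtrace M = (\<Sum>i<dim_row M. M $$ (i, i))"

end

theory Submission
  imports Defs
begin


lemma sum_list_zero_aux: "\<forall>x\<in>set xs. f x = (0::real) \<Longrightarrow> sum_list (map f xs) = 0"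
  by (induct xs) auto

lemma sum_take_sorted_threshold:
  fixes s :: "real list"
  assumes "sorted s" "1 \<le> n" "n \<le> length s"
  shows "sum_list (take n s) = real n * s!(n-1) + (\<Sum>x\<leftarrow>s. min (x - s!(n-1)) 0)"
proof -
  let ?t = "s!(n-1)"
  have s: "s = take n s @ drop n s" by simp
  have "(\<Sum>x\<leftarrow>s. min (x - ?t) 0) = (\<Sum>x\<leftarrow>take n s. min (x - ?t) 0) + (\<Sum>x\<leftarrow>drop n s. min (x - ?t) 0)"
    by (subst s, simp only: map_append sum_list_append)
  also have "(\<Sum>x\<leftarrow>drop n s. min (x - ?t) 0) = 0"
  proof -
    have "\<forall>x\<in>set (drop n s). min (x - ?t) 0 = 0"
    proof
      fix x assume "x \<in> set (drop n s)"
      then obtain i where i: "i < length (drop n s)" "x = drop n s ! i" by (auto simp: in_set_conv_nth)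
      then have "x = s ! (n + i)" "n + i < length s" using assms by auto
      then have "?t \<le> x" using sorted_nth_mono[OF assms(1), of "n-1" "n+i"] by simp
      then show "min (x - ?t) 0 = 0" by simp
    qed
    then show ?thesis by (rule sum_list_zero_aux)
  qed
  also have "(\<Sum>x\<leftarrow>take n s. min (x - ?t) 0) = (\<Sum>x\<leftarrow>take n s. x - ?t)"
  proof (rule arg_cong[where f=sum_list], rule map_cong[OF refl])
    fix x assume "x \<in> set (take n s)"
    then obtain i where i: "i < length (take n s)" "x = take n s ! i" by (auto simp: in_set_conv_nth)
    then have "x = s ! i" "i \<le> n - 1" "n - 1 < length s" using assms by auto
    then have "x \<le> ?t" using sorted_nth_mono[OF assms(1), of i "n-1"] by simp
    then show "min (x - ?t) 0 = x - ?t" by simp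
  qed
  also have "(\<Sum>x\<leftarrow>take n s. x - ?t) = sum_list (take n s) - real n * ?t"
    using assms by (simp add: sum_list_subtractf sum_list_triv)
  finally show ?thesis by simp
qed

lemma kyfan_weights:
  fixes lam w :: "nat \<Rightarrow> real"
  assumes w: "\<forall>j<D. 0 \<le> w j \<and> w j \<le> 1" and sw: "(\<Sum>j<D. w j) = real n"
    and n: "1 \<le> n" "n \<le> D"
  shows "sum_list (take n (sort (map lam [0..<D]))) \<le> (\<Sum>j<D. lam j * w j)"
proof -
  define s where "s = sort (map lam [0..<D])"
  define t where "t = s!(n-1)"
  have ss: "sorted s" "length s = D" unfolding s_def by auto
  have "sum_list (take n s) = real n * t + (\<Sum>x\<leftarrow>s. min (x - t) 0)"
    unfolding t_def by (rule sum_take_sorted_threshold) (use ss n in auto)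
  also have "(\<Sum>x\<leftarrow>s. min (x - t) 0) = (\<Sum>x\<leftarrow>map lam [0..<D]. min (x - t) 0)"
  proof -
    have "mset (map (\<lambda>x. min (x - t) 0) s) = mset (map (\<lambda>x. min (x - t) 0) (map lam [0..<D]))"
      unfolding s_def by (simp only: mset_map mset_sort)
    then show ?thesis by (simp only: sum_mset_sum_list[symmetric])
  qed
  also have "\<dots> = (\<Sum>j<D. min (lam j - t) 0)"
    by (simp add: sum_list_distinct_conv_sum_set lessThan_atLeast0)
  also have "\<dots> \<le> (\<Sum>j<D. (lam j - t) * w j)"
  proof (rule sum_mono)
    fix j assume "j \<in> {..<D}"
    then have "0 \<le> w j" "w j \<le> 1" using w by auto
    then show "min (lam j - t) 0 \<le> (lam j - t) * w j"
    proof (cases "lam j - t \<ge> 0")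
      case True then show ?thesis using \<open>0 \<le> w j\<close> by simp
    next
      case False
      then have "(lam j - t) * 1 \<le> (lam j - t) * w j"
        using \<open>w j \<le> 1\<close> by (intro mult_left_mono_neg) auto
      then show ?thesis using False by simp
    qed
  qed
  also have "(\<Sum>j<D. (lam j - t) * w j) = (\<Sum>j<D. lam j * w j) - t * real n"
    by (simp add: left_diff_distrib sum_subtractf sum_distrib_left[symmetric] sw)
  finally show ?thesis unfolding s_def by (simp add: algebra_simps)
qed



lemma exists_null_vec:
  fixes cs :: "complex vec list"
  assumes cs: "set cs \<subseteq> carrier_vec D" and len: "length cs < D"
  shows "\<exists>v \<in> carrier_vec D. v \<noteq> 0\<^sub>v D \<and> (\<forall>c\<in>set cs. c \<bullet> v = 0)"
proof -
  define f where "f = (\<lambda>i. if i < length cs then cs ! i else 0\<^sub>v D)"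
  define G where "G = mat\<^sub>r D D (\<lambda>i. if i = D - 1 then 0\<^sub>v D else f i)"
  have fc: "f \<in> {0..<D} \<rightarrow> carrier_vec D" using cs unfolding f_def by (auto simp: nth_mem subsetD)
  have "det G = 0" unfolding G_def by (rule det_row_0[OF _ fc]) (use len in auto)
  moreover have G: "G \<in> carrier_mat D D" unfolding G_def by auto
  ultimately obtain v where v: "v \<in> carrier_vec D" "v \<noteq> 0\<^sub>v D" "G *\<^sub>v v = 0\<^sub>v D"
    using det_0_iff_vec_prod_zero[OF G] by auto
  have "\<forall>c\<in>set cs. c \<bullet> v = 0"
  proof
    fix c assume "c \<in> set cs"
    then obtain i where i: "i < length cs" "c = cs ! i" by (auto simp: in_set_conv_nth)
    have "i < D" "i \<noteq> D - 1" using i len by auto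
    have "(G *\<^sub>v v) $ i = row G i \<bullet> v" using \<open>i < D\<close> G by auto
    also have "row G i = c" unfolding G_def using \<open>i < D\<close> \<open>i \<noteq> D - 1\<close> i cs
      by (subst row_mat_of_row_fun) (auto simp: f_def nth_mem subsetD)
    finally show "c \<bullet> v = 0" using v \<open>i < D\<close> by auto
  qed
  with v show ?thesis by auto
qed

definition orthonormal :: "complex vec list \<Rightarrow> bool" where
  "orthonormal ws = (\<forall>i<length ws. \<forall>j<length ws. ws ! i \<bullet>c ws ! j = (if i = j then 1 else 0))"

lemma exists_unit_null_vec:
  fixes cs :: "complex vec list"
  assumes cs: "set cs \<subseteq> carrier_vec D" and len: "length cs < D"
  shows "\<exists>v \<in> carrier_vec D. v \<bullet>c v = 1 \<and> (\<forall>c\<in>set cs. c \<bullet> v = 0)"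
proof -
  obtain v where v: "v \<in> carrier_vec D" "v \<noteq> 0\<^sub>v D" "\<forall>c\<in>set cs. c \<bullet> v = 0"
    using exists_null_vec[OF assms] by auto
  have pos: "v \<bullet>c v > 0" using v by simp
  define r where "r = Re (v \<bullet>c v)"
  have vr: "v \<bullet>c v = complex_of_real r" "r > 0" using pos unfolding r_def
    by (auto simp: less_complex_def complex_eq_iff)
  define a where "a = complex_of_real (1 / sqrt r)"
  define w where "w = a \<cdot>\<^sub>v v"
  have w: "w \<in> carrier_vec D" unfolding w_def using v by auto
  have "w \<bullet>c w = a * conjugate a * (v \<bullet>c v)"
    unfolding w_def conjugate_smult_vec using v by (simp add: ac_simps)
  also have "\<dots> = 1" using vr unfolding a_def
    by (simp add: field_simps flip: of_real_mult)
  finally have "w \<bullet>c w = 1" .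
  moreover have "\<forall>c\<in>set cs. c \<bullet> w = 0" using v cs unfolding w_def
    by (auto intro!: scalar_prod_smult_distrib[of _ D, THEN trans] simp: subsetD)
  ultimately show ?thesis using w by auto
qed


lemma orthonormal_snoc:
  assumes vs: "set vs \<subseteq> carrier_vec D" and v: "v \<in> carrier_vec D"
    and o: "orthonormal vs" and vv: "v \<bullet>c v = 1" and perp: "\<forall>u\<in>set vs. conjugate u \<bullet> v = 0"
  shows "orthonormal (vs @ [v])"
  unfolding orthonormal_def
proof (intro allI impI)
  fix i j assume i: "i < length (vs @ [v])" and j: "j < length (vs @ [v])"
  have p1: "u \<bullet>c v = 0" if "u \<in> set vs" for u
  proof -
    have "u \<bullet>c v = conjugate (conjugate u \<bullet> v)"
      using conjugate_conjugate_sprod[of u D v] that vs v by auto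
    also have "\<dots> = 0" using perp that by simp
    finally show ?thesis .
  qed
  have p2: "v \<bullet>c u = 0" if "u \<in> set vs" for u
  proof -
    have "v \<bullet>c u = conjugate u \<bullet> v"
      using conjugate_vec_sprod_comm[of v D u] that vs v by auto
    also have "\<dots> = 0" using perp that by simp
    finally show ?thesis .
  qed
  show "(vs @ [v]) ! i \<bullet>c (vs @ [v]) ! j = (if i = j then 1 else 0)"
  proof (cases "i < length vs")
    case True note ti = this
    show ?thesis
    proof (cases "j < length vs")
      case True then show ?thesis using ti o unfolding orthonormal_def by (simp add: nth_append)
    next
      case False then have "j = length vs" using j by auto
      then show ?thesis using ti p1[of "vs ! i"] by (simp add: nth_append)
    qed
  next
    case False then have ii: "i = length vs" using i by auto
    show ?thesis
    proof (cases "j < length vs")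
      case True then show ?thesis using ii p2[of "vs ! j"] by (simp add: nth_append)
    next
      case False then have "j = length vs" using j by auto
      then show ?thesis using ii vv by (simp add: nth_append)
    qed
  qed
qed

lemma orthonormal_extend:
  fixes us cs :: "complex vec list"
  assumes us: "set us \<subseteq> carrier_vec D" and o: "orthonormal us" and cs: "set cs \<subseteq> carrier_vec D"
    and cu: "\<forall>c\<in>set cs. \<forall>u\<in>set us. c \<bullet> u = 0"
  shows "length us \<le> k \<Longrightarrow> length cs + k \<le> D \<Longrightarrow> \<exists>ws. set ws \<subseteq> carrier_vec D \<and> orthonormal (us @ ws) \<and>
      length (us @ ws) = k \<and> (\<forall>c\<in>set cs. \<forall>u\<in>set ws. c \<bullet> u = 0)"
proof (induction k)
  case 0 then show ?case using o by (intro exI[of _ "[]"]) auto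
next
  case (Suc k)
  show ?case
  proof (cases "length us = Suc k")
    case True then show ?thesis using o by (intro exI[of _ "[]"]) auto
  next
    case False
    then obtain ws where ws: "set ws \<subseteq> carrier_vec D" "orthonormal (us @ ws)" "length (us @ ws) = k"
      "\<forall>c\<in>set cs. \<forall>u\<in>set ws. c \<bullet> u = 0" using Suc by auto
    let ?vs = "us @ ws"
    have vs: "set ?vs \<subseteq> carrier_vec D" using us ws by auto
    have "set (cs @ map conjugate ?vs) \<subseteq> carrier_vec D" using cs vs by auto
    moreover have "length (cs @ map conjugate ?vs) < D" using Suc.prems ws by auto
    ultimately obtain v where v: "v \<in> carrier_vec D" "v \<bullet>c v = 1"
      "\<forall>c\<in>set (cs @ map conjugate ?vs). c \<bullet> v = 0"
      using exists_unit_null_vec by blast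
    have "orthonormal (?vs @ [v])"
      by (rule orthonormal_snoc[OF vs v(1) ws(2) v(2)]) (use v(3) in auto)
    then show ?thesis using ws v by (intro exI[of _ "ws @ [v]"]) auto
  qed
qed



lemma adjoint_dims[simp]: "dim_row (mat_adjoint A) = dim_col A" "dim_col (mat_adjoint A) = dim_row A"
  unfolding mat_adjoint_def by auto

lemma adjoint_carrier[simp]: "A \<in> carrier_mat n m \<Longrightarrow> mat_adjoint A \<in> carrier_mat m n"
  by (intro carrier_matI) (simp_all add: carrier_matD)

lemma adjoint_index[simp]: "i < dim_col A \<Longrightarrow> j < dim_row A \<Longrightarrow> mat_adjoint A $$ (i,j) = conjugate (A $$ (j,i))"
  unfolding mat_adjoint_def by (simp add: mat_of_rows_index)

lemma adjoint_adjoint[simp]: "mat_adjoint (mat_adjoint (A :: complex mat)) = A"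
  by (rule eq_matI) auto

lemma adjoint_mult:
  fixes A B :: "complex mat"
  assumes "A \<in> carrier_mat n m" "B \<in> carrier_mat m k"
  shows "mat_adjoint (A * B) = mat_adjoint B * mat_adjoint A"
proof (rule eq_matI)
  fix i j assume i: "i < dim_row (mat_adjoint B * mat_adjoint A)" and j: "j < dim_col (mat_adjoint B * mat_adjoint A)"
  then have ij: "i < k" "j < n" using assms by auto
  have "mat_adjoint (A * B) $$ (i, j) = cnj (\<Sum>l<m. A $$ (j,l) * B $$ (l,i))"
    using ij assms by (simp add: scalar_prod_def lessThan_atLeast0)
  also have "\<dots> = (\<Sum>l<m. cnj (B $$ (l,i)) * cnj (A $$ (j,l)))"
    by (simp add: ac_simps)
  also have "\<dots> = (mat_adjoint B * mat_adjoint A) $$ (i, j)"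
    using ij assms by (simp add: scalar_prod_def lessThan_atLeast0)
  finally show "mat_adjoint (A * B) $$ (i, j) = (mat_adjoint B * mat_adjoint A) $$ (i, j)" .
qed (use assms in auto)

lemma adjoint_one[simp]: "mat_adjoint (1\<^sub>m n :: complex mat) = 1\<^sub>m n"
  by (rule eq_matI) auto

lemma unitary_of_orthonormal:
  assumes ws: "set ws \<subseteq> carrier_vec D" "length ws = D" "orthonormal ws"
  defines "W \<equiv> mat_of_cols D ws"
  shows "mat_adjoint W * W = 1\<^sub>m D" "W * mat_adjoint W = 1\<^sub>m D" "W \<in> carrier_mat D D"
proof -
  show W: "W \<in> carrier_mat D D" unfolding W_def using ws by auto
  show 1: "mat_adjoint W * W = 1\<^sub>m D"
  proof (rule eq_matI)
    fix i j assume "i < dim_row (1\<^sub>m D)" "j < dim_col (1\<^sub>m D)"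
    then have ij: "i < D" "j < D" by auto
    have ci: "ws ! i \<in> carrier_vec D" "ws ! j \<in> carrier_vec D" using ws ij by (auto simp: nth_mem subsetD)
    have "(mat_adjoint W * W) $$ (i,j) = (\<Sum>l<D. cnj (ws ! i $ l) * ws ! j $ l)"
      using ij ws W unfolding W_def by (simp add: scalar_prod_def lessThan_atLeast0 mat_of_cols_index)
    also have "\<dots> = ws ! j \<bullet>c ws ! i"
      using ci by (simp add: scalar_prod_def lessThan_atLeast0 ac_simps)
    also have "\<dots> = 1\<^sub>m D $$ (i,j)" using ws(3) ij ws(2) unfolding orthonormal_def by auto
    finally show "(mat_adjoint W * W) $$ (i,j) = 1\<^sub>m D $$ (i,j)" .
  qed (use W in auto)
  show "W * mat_adjoint W = 1\<^sub>m D"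
    by (rule mat_mult_left_right_inverse[OF _ W 1]) (use W in auto)
qed



lemma normalize_vec:
  fixes v :: "complex vec"
  assumes v: "v \<in> carrier_vec D" "v \<noteq> 0\<^sub>v D"
  shows "\<exists>a. a \<noteq> 0 \<and> (a \<cdot>\<^sub>v v) \<bullet>c (a \<cdot>\<^sub>v v) = 1"
proof -
  have pos: "v \<bullet>c v > 0" using v by simp
  define r where "r = Re (v \<bullet>c v)"
  have vr: "v \<bullet>c v = complex_of_real r" "r > 0" using pos unfolding r_def
    by (auto simp: less_complex_def complex_eq_iff)
  define a where "a = complex_of_real (1 / sqrt r)"
  have "(a \<cdot>\<^sub>v v) \<bullet>c (a \<cdot>\<^sub>v v) = a * conjugate a * (v \<bullet>c v)"
    unfolding conjugate_smult_vec using v by (simp add: ac_simps)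
  also have "\<dots> = 1" using vr unfolding a_def
    by (simp add: field_simps flip: of_real_mult)
  finally have "(a \<cdot>\<^sub>v v) \<bullet>c (a \<cdot>\<^sub>v v) = 1" .
  moreover have "a \<noteq> 0" using vr unfolding a_def by simp
  ultimately show ?thesis by blast
qed

lemma adjoint_four_block_diag:
  assumes P: "P \<in> carrier_mat m m"
  shows "mat_adjoint (four_block_mat (1\<^sub>m 1) (0\<^sub>m 1 m) (0\<^sub>m m 1) P)
       = four_block_mat (1\<^sub>m 1) (0\<^sub>m 1 m) (0\<^sub>m m 1) (mat_adjoint (P :: complex mat))"
  by (rule eq_matI) (use P in auto)

lemma schur_unitary:
  assumes "(A :: complex mat) \<in> carrier_mat n n"
      and "char_poly A = (\<Prod> (e :: complex) \<leftarrow> es. [:- e, 1:])"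
  shows "\<exists>B P. similar_mat_wit A B P (mat_adjoint P) \<and> upper_triangular B \<and> diag_mat B = es"
  using assms
proof (induct es arbitrary: n A)
  case Nil
  with degree_monic_char_poly[of A n]
  have "n = 0" by auto
  then show ?case using Nil
    by (intro exI[of _ A] exI[of _ "1\<^sub>m 0"]) (auto simp: similar_mat_wit_def diag_mat_def)
next
  case (Cons e es n A)
  let ?n1 = "n - 1"
  from Cons have A: "A \<in> carrier_mat n n" and dim: "dim_row A = n" by auto
  let ?cp = "char_poly A"
  from Cons(3)
  have cp: "?cp = [: -e, 1 :] * (\<Prod>e \<leftarrow> es. [:- e, 1:])" by auto
  have mon: "monic (\<Prod>e\<leftarrow> es. [:- e, 1:])" by (rule monic_prod_list, auto)
  have deg: "degree ?cp = Suc (degree (\<Prod>e\<leftarrow> es. [:- e, 1:]))" unfolding cp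
    by (subst degree_mult_eq, insert mon, auto)
  with degree_monic_char_poly[OF A] have n: "n \<noteq> 0" by auto
  define v0 where "v0 = find_eigenvector A e"
  have e: "eigenvalue A e" 
    unfolding eigenvalue_root_char_poly[OF A] cp by simp
  from find_eigenvector[OF A e] have ev: "eigenvector A v0 e" unfolding v0_def .
  from this[unfolded eigenvector_def]
  have v0[simp]: "v0 \<in> carrier_vec n" and v00: "v0 \<noteq> 0\<^sub>v n" and ev0: "A *\<^sub>v v0 = e \<cdot>\<^sub>v v0" using A by auto
  obtain a where a: "a \<noteq> 0" "(a \<cdot>\<^sub>v v0) \<bullet>c (a \<cdot>\<^sub>v v0) = 1" using normalize_vec[OF v0 v00] by auto
  define v where "v = a \<cdot>\<^sub>v v0"
  have v[simp]: "v \<in> carrier_vec n" unfolding v_def by auto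
  have v0': "v \<noteq> 0\<^sub>v n" using a(2) v_def by auto
  have eigen[simp]: "A *\<^sub>v v = e \<cdot>\<^sub>v v" unfolding v_def
    using mult_mat_vec[OF A v0, of a] ev0 by (simp add: smult_smult_assoc mult.commute)
  have ov: "orthonormal [v]" using a(2) unfolding orthonormal_def v_def by auto
  obtain ws' where ws': "set ws' \<subseteq> carrier_vec n" "orthonormal ([v] @ ws')" "length ([v] @ ws') = n"
    using orthonormal_extend[of "[v]" n "[]" n] ov n by auto
  define ws where "ws = v # ws'"
  have ws: "set ws \<subseteq> carrier_vec n" "orthonormal ws" "length ws = n"
    using ws' unfolding ws_def by auto
  have hdws: "hd ws = v" unfolding ws_def by simp
  have cws: "corthogonal ws" using ws(2) unfolding orthonormal_def corthogonal_def by auto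
  define W where "W = mat_of_cols n ws"
  define W' where "W' = corthogonal_inv W"
  have W'adj: "W' = mat_adjoint W"
  proof -
    have eqm: "map vec_inv ws = map conjugate ws"
    proof (rule map_cong[OF refl])
      fix x assume x: "x \<in> set ws"
      then have "x \<bullet>c x = 1" using ws(2) unfolding orthonormal_def by (auto simp: in_set_conv_nth)
      then show "vec_inv x = conjugate x" unfolding vec_inv_def by simp
    qed
    have "W' = mat_of_rows n (map vec_inv ws)" unfolding W'_def W_def corthogonal_inv_def using ws by simp
    moreover have "mat_adjoint W = mat_of_rows n (map conjugate ws)" unfolding W_def mat_adjoint_def using ws by simp
    ultimately show ?thesis by (simp only: eqm)
  qed
  from unitary_of_orthonormal[OF ws(1) ws(3) ws(2)] have WW: "mat_adjoint W * W = 1\<^sub>m n" "W * mat_adjoint W = 1\<^sub>m n" 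
    and W: "W \<in> carrier_mat n n" unfolding W_def by auto
  have W': "W' \<in> carrier_mat n n" unfolding W'adj using W by auto
  define A' where "A' = W' * A * W"
  obtain A1 A2 A0 A3 where splitA': "split_block A' 1 1 = (A1,A2,A0,A3)"
    by (cases "split_block A' 1 1", auto)
  have A': "A' \<in> carrier_mat n n" using W W' A unfolding A'_def by auto
  have A'A_wit: "similar_mat_wit A' A W' W"
    by (rule similar_mat_witI[of _ _ n], insert W W' A A' WW, auto simp: A'_def W'adj)
  hence A'A: "similar_mat A' A" unfolding similar_mat_def by blast
  from similar_mat_wit_sym[OF A'A_wit] have simAA': "similar_mat_wit A A' W W'" by auto
  let ?f = "(\<lambda> i. if i = 0 then e else 0)"
  have col0: "col A' 0 = vec n ?f"
    unfolding A'_def W'_def W_def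
    using corthogonal_col_ev_0[OF A v v0' eigen n hdws ws(1) cws ws(3)].
  from A' n have "dim_row A' = 1 + ?n1" "dim_col A' = 1 + ?n1" by auto
  from split_block[OF splitA' this] have A2: "A2 \<in> carrier_mat 1 ?n1"
    and A3: "A3 \<in> carrier_mat ?n1 ?n1" 
    and A'block: "A' = four_block_mat A1 A2 A0 A3" by auto
  have A1id: "A1 = mat 1 1 (\<lambda> _. e)"
    using splitA'[unfolded split_block_def Let_def] arg_cong[OF col0, of "\<lambda> v. v $ 0"] A' n
    by (auto simp: col_def)
  have A1: "A1 \<in> carrier_mat 1 1" unfolding A1id by auto
  {
    fix i
    assume "i < ?n1"
    with arg_cong[OF col0, of "\<lambda> v. v $ Suc i"] A'
    have "A' $$ (Suc i, 0) = 0" by auto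
  } note A'0 = this
  have A0id: "A0 = 0\<^sub>m ?n1 1"
    using splitA'[unfolded split_block_def Let_def] A'0 A' by auto
  have A0: "A0 \<in> carrier_mat ?n1 1" unfolding A0id by auto
  from cp char_poly_similar[OF A'A]
  have cp: "char_poly A' = [: -e,1 :] * (\<Prod> e \<leftarrow> es. [:- e, 1:])" by simp
  also have "char_poly A' = char_poly A1 * char_poly A3" 
    unfolding A'block A0id
    by (rule char_poly_four_block_zeros_col[OF A1 A2 A3])
  also have "char_poly A1 = [: -e,1 :]"
    by (simp add: A1id char_poly_defs det_def sign_def)
  finally have cp: "char_poly A3 = (\<Prod> e \<leftarrow> es. [:- e, 1:])"
    by (metis mult_cancel_left pCons_eq_0_iff zero_neq_one)
  from Cons(1)[OF A3 cp] obtain B P' where simIH: "similar_mat_wit A3 B P' (mat_adjoint P')"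
    and ut: "upper_triangular B" and diag: "diag_mat B = es" by auto
  define Q' where "Q' = mat_adjoint P'"
  note simIH = simIH[folded Q'_def]
  from similar_mat_witD2[OF A3 simIH] 
  have B: "B \<in> carrier_mat ?n1 ?n1" and P': "P' \<in> carrier_mat ?n1 ?n1" and Q': "Q' \<in> carrier_mat ?n1 ?n1" 
    and PQ': "P' * Q' = 1\<^sub>m ?n1" by auto
  let ?P' = "four_block_mat (1\<^sub>m 1) (0\<^sub>m 1 ?n1) (0\<^sub>m ?n1 1) P'"
  let ?Q' = "four_block_mat (1\<^sub>m 1) (0\<^sub>m 1 ?n1) (0\<^sub>m ?n1 1) Q'"
  define C where "C = four_block_mat A1 (A2 * P') A0 B"
  have A0_eq: "A0 = P' * A0 * 1\<^sub>m 1" unfolding A0id using P' by auto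
  have simA'C: "similar_mat_wit A' C ?P' ?Q'" unfolding A'block C_def
    by (rule similar_mat_wit_four_block[OF similar_mat_wit_refl[OF A1] simIH _ A0_eq A1 A3 A0],
    insert PQ' A2 P' Q', auto)
  have ut1: "upper_triangular A1" unfolding A1id by auto
  have utC: "upper_triangular C" unfolding C_def A0id
    by (intro upper_triangular_four_block[OF _ B ut1 ut], auto simp: A1id)
  from A1id have diagA1: "diag_mat A1 = [e]" unfolding diag_mat_def by auto
  from diag_four_block_mat[OF A1 B] have diagC: "diag_mat C = e # es" unfolding diag diagA1 C_def by simp
  have P'c: "?P' \<in> carrier_mat n n" using P' n by auto
  have Qadj: "?Q' * W' = mat_adjoint (W * ?P')"
    unfolding W'adj Q'_def
    by (subst adjoint_mult[OF W P'c], subst adjoint_four_block_diag[OF P']) simp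
  from similar_mat_wit_trans[OF simAA' simA'C] have "similar_mat_wit A C (W * ?P') (?Q' * W')" .
  then show ?case using utC diagC unfolding Qadj by blast
qed



lemma adj_mult_diag:
  fixes Z :: "complex mat"
  assumes Z: "Z \<in> carrier_mat m p" and k: "k < p"
  shows "(mat_adjoint Z * Z) $$ (k,k) = complex_of_real (\<Sum>l<m. (cmod (Z $$ (l,k)))^2)"
proof -
  have "(mat_adjoint Z * Z) $$ (k,k) = (\<Sum>l<m. cnj (Z $$ (l,k)) * Z $$ (l,k))"
    using Z k by (simp add: scalar_prod_def lessThan_atLeast0)
  also have "\<dots> = (\<Sum>l<m. complex_of_real ((cmod (Z $$ (l,k)))^2))"
    by (rule sum.cong[OF refl]) (simp only: complex_norm_square mult.commute)
  finally show ?thesis by simp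
qed

lemma mtrace_comm:
  fixes P Q :: "complex mat"
  assumes P: "P \<in> carrier_mat n m" and Q: "Q \<in> carrier_mat m n"
  shows "mtrace (P * Q) = mtrace (Q * P)"
proof -
  have "mtrace (P * Q) = (\<Sum>i<n. \<Sum>j<m. P $$ (i,j) * Q $$ (j,i))"
    unfolding mtrace_def using P Q by (simp add: scalar_prod_def lessThan_atLeast0)
  also have "\<dots> = (\<Sum>j<m. \<Sum>i<n. Q $$ (j,i) * P $$ (i,j))"
    by (subst sum.swap) (simp add: mult.commute)
  also have "\<dots> = mtrace (Q * P)"
    unfolding mtrace_def using P Q by (simp add: scalar_prod_def lessThan_atLeast0)
  finally show ?thesis .
qed

lemma diag_conj_entry:
  fixes U T :: "complex mat"
  assumes U: "U \<in> carrier_mat D D" and T: "T \<in> carrier_mat D D"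
    and diag: "\<forall>i<D. \<forall>j<D. i \<noteq> j \<longrightarrow> T $$ (i,j) = 0" and k: "k < D"
  shows "(U * T * mat_adjoint U) $$ (k,k) = (\<Sum>j<D. T $$ (j,j) * complex_of_real ((cmod (U $$ (k,j)))^2))"
proof -
  have UT: "(U * T) $$ (k,l) = U $$ (k,l) * T $$ (l,l)" if l: "l < D" for l
  proof -
    have "(U * T) $$ (k,l) = (\<Sum>j<D. U $$ (k,j) * T $$ (j,l))"
      using U T k l by (simp add: scalar_prod_def lessThan_atLeast0)
    also have "\<dots> = (\<Sum>j<D. if j = l then U $$ (k,l) * T $$ (l,l) else 0)"
      by (rule sum.cong[OF refl]) (use diag l in auto)
    also have "\<dots> = U $$ (k,l) * T $$ (l,l)" using l by simp
    finally show ?thesis .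
  qed
  have "(U * T * mat_adjoint U) $$ (k,k) = (\<Sum>l<D. (U * T) $$ (k,l) * cnj (U $$ (k,l)))"
    using U T k by (simp add: scalar_prod_def lessThan_atLeast0)
  also have "\<dots> = (\<Sum>l<D. T $$ (l,l) * complex_of_real ((cmod (U $$ (k,l)))^2))"
  proof (rule sum.cong[OF refl])
    fix l assume "l \<in> {..<D}"
    then have "(U * T) $$ (k,l) = U $$ (k,l) * T $$ (l,l)" using UT by auto
    then show "(U * T) $$ (k,l) * cnj (U $$ (k,l)) = T $$ (l,l) * complex_of_real ((cmod (U $$ (k,l)))^2)"
      by (simp only: complex_norm_square ac_simps)
  qed
  finally show ?thesis .
qed

lemma proots_linear_prod: "proots (\<Prod>(e::complex)\<leftarrow>es. [:- e, 1:]) = mset es"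
proof (induct es)
  case (Cons e es)
  have "(\<Prod>(e::complex)\<leftarrow>es. [:- e, 1:]) \<noteq> 0" by (auto simp: prod_list_zero_iff)
  moreover have "[:- e, 1:] \<noteq> 0" by simp
  ultimately have "proots ([:- e, 1:] * (\<Prod>(e::complex)\<leftarrow>es. [:- e, 1:])) = {#e#} + mset es"
    using Cons by (subst proots_mult) (simp_all only: proots_linear_factor minus_minus not_False_eq_True)
  then show ?case by simp
qed simp



lemma diagm_carrier[simp]: "diagm D f \<in> carrier_mat D D"
  unfolding diagm_def by auto

lemma diagm_index[simp]: "i < D \<Longrightarrow> j < D \<Longrightarrow> diagm D f $$ (i,j) = (if i = j then f i else 0)"
  unfolding diagm_def by auto

lemma key_vec:
  fixes A B :: "complex mat" and \<mu> :: "nat \<Rightarrow> real"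
  assumes A: "A \<in> carrier_mat D D" and B: "B \<in> carrier_mat D D"
    and u: "u \<in> carrier_vec D" and perp: "\<forall>j. n \<le> j \<longrightarrow> j < D \<longrightarrow> row (mat_adjoint A) j \<bullet> u = 0"
  defines "\<psi> \<equiv> diagm D (\<lambda>i. complex_of_real (\<mu> i))"
    and "\<psi>n \<equiv> diagm D (\<lambda>i. if i < n then complex_of_real (\<mu> i) else 0)"
  shows "mat_adjoint (A * \<psi> * B) *\<^sub>v u = mat_adjoint (A * \<psi>n * B) *\<^sub>v u"
proof -
  have \<psi>: "\<psi> \<in> carrier_mat D D" and \<psi>n: "\<psi>n \<in> carrier_mat D D" unfolding \<psi>_def \<psi>n_def by auto
  define y where "y = mat_adjoint A *\<^sub>v u"
  have y: "y \<in> carrier_vec D" unfolding y_def using adjoint_carrier[OF A] u by (rule mult_mat_vec_carrier)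
  have y0: "y $ j = 0" if "n \<le> j" "j < D" for j
    unfolding y_def using that perp A by auto
  have py: "mat_adjoint \<psi> *\<^sub>v y = mat_adjoint \<psi>n *\<^sub>v y"
  proof (rule eq_vecI)
    fix i assume "i < dim_vec (mat_adjoint \<psi>n *\<^sub>v y)"
    then have i: "i < D" using \<psi>n by auto
    have "(mat_adjoint \<psi> *\<^sub>v y) $ i = (\<Sum>l<D. cnj (\<psi> $$ (l,i)) * y $ l)"
      using i \<psi> y by (simp add: scalar_prod_def lessThan_atLeast0)
    also have "\<dots> = (\<Sum>l<D. cnj (\<psi>n $$ (l,i)) * y $ l)"
    proof (rule sum.cong[OF refl])
      fix l assume l: "l \<in> {..<D}"
      show "cnj (\<psi> $$ (l,i)) * y $ l = cnj (\<psi>n $$ (l,i)) * y $ l"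
      proof (cases "l < n")
        case True then show ?thesis using l i unfolding \<psi>_def \<psi>n_def by auto
      next
        case False then show ?thesis using l y0 by auto
      qed
    qed
    also have "\<dots> = (mat_adjoint \<psi>n *\<^sub>v y) $ i"
      using i \<psi>n y by (simp add: scalar_prod_def lessThan_atLeast0)
    finally show "(mat_adjoint \<psi> *\<^sub>v y) $ i = (mat_adjoint \<psi>n *\<^sub>v y) $ i" .
  qed (use \<psi> \<psi>n in auto)
  have "mat_adjoint (A * \<psi> * B) = mat_adjoint B * (mat_adjoint \<psi> * mat_adjoint A)"
    using A B \<psi> by (simp add: adjoint_mult[of _ D D _ D] assoc_mult_mat[OF adjoint_carrier[OF B] adjoint_carrier[OF \<psi>] adjoint_carrier[OF A]])
  moreover have "mat_adjoint (A * \<psi>n * B) = mat_adjoint B * (mat_adjoint \<psi>n * mat_adjoint A)"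
    using A B \<psi>n by (simp add: adjoint_mult[of _ D D _ D] assoc_mult_mat[OF adjoint_carrier[OF B] adjoint_carrier[OF \<psi>n] adjoint_carrier[OF A]])
  moreover have "(mat_adjoint B * (mat_adjoint \<psi> * mat_adjoint A)) *\<^sub>v u = mat_adjoint B *\<^sub>v (mat_adjoint \<psi> *\<^sub>v y)"
    unfolding y_def
    by (subst assoc_mult_mat_vec[OF adjoint_carrier[OF B] mult_carrier_mat[OF adjoint_carrier[OF \<psi>] adjoint_carrier[OF A]] u],
        subst assoc_mult_mat_vec[OF adjoint_carrier[OF \<psi>] adjoint_carrier[OF A] u], rule refl)
  moreover have "(mat_adjoint B * (mat_adjoint \<psi>n * mat_adjoint A)) *\<^sub>v u = mat_adjoint B *\<^sub>v (mat_adjoint \<psi>n *\<^sub>v y)"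
    unfolding y_def
    by (subst assoc_mult_mat_vec[OF adjoint_carrier[OF B] mult_carrier_mat[OF adjoint_carrier[OF \<psi>n] adjoint_carrier[OF A]] u],
        subst assoc_mult_mat_vec[OF adjoint_carrier[OF \<psi>n] adjoint_carrier[OF A] u], rule refl)
  ultimately show ?thesis using py by simp
qed



lemma kyfan_diag:
  fixes M :: "complex mat"
  assumes M: "M \<in> carrier_mat D D" and herm: "mat_adjoint M = M" and n: "1 \<le> n" "n \<le> D"
  shows "chi n M \<le> (\<Sum>k<n. Re (M $$ (k,k)))"
proof -
  obtain es where es: "char_poly M = (\<Prod>a\<leftarrow>es. [:- a, 1:])" "length es = D"
    using char_poly_factorized[OF M] by auto
  obtain T U where sim: "similar_mat_wit M T U (mat_adjoint U)" and ut: "upper_triangular T"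
    and dT: "diag_mat T = es"
    using schur_unitary[OF M es(1)] by auto
  note sd = similar_mat_witD2[OF M sim]
  have UU: "U * mat_adjoint U = 1\<^sub>m D" "mat_adjoint U * U = 1\<^sub>m D" using sd(1,2) .
  have MT: "M = U * T * mat_adjoint U" using sd(3) .
  have T: "T \<in> carrier_mat D D" using sd(5) .
  have U: "U \<in> carrier_mat D D" using sd(6) .
  have Ua: "mat_adjoint U \<in> carrier_mat D D" using U by simp
  have TM: "T = mat_adjoint U * M * U"
  proof -
    have "mat_adjoint U * M * U = (mat_adjoint U * U) * T * (mat_adjoint U * U)"
      unfolding MT using U T Ua by (simp add: assoc_mult_mat[of _ D D _ D _ D] mult_carrier_mat[of _ D D _ D])
    also have "\<dots> = T" using UU T by simp
    finally show ?thesis by simp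
  qed
  have Th: "mat_adjoint T = T"
  proof -
    have "mat_adjoint T = mat_adjoint U * mat_adjoint M * mat_adjoint (mat_adjoint U)"
      unfolding TM using U Ua M
      by (simp add: adjoint_mult[of _ D D _ D] assoc_mult_mat[of _ D D _ D _ D] mult_carrier_mat[of _ D D _ D] Ua)
    then show ?thesis using herm TM by simp
  qed
  have Tc: "T $$ (i,j) = cnj (T $$ (j,i))" if "i < D" "j < D" for i j
  proof -
    have "T $$ (i,j) = mat_adjoint T $$ (i,j)" using Th by simp
    also have "\<dots> = cnj (T $$ (j,i))" using that T by simp
    finally show ?thesis .
  qed
  have Tdiag: "\<forall>i<D. \<forall>j<D. i \<noteq> j \<longrightarrow> T $$ (i,j) = 0"
  proof (intro allI impI)
    fix i j assume ij: "i < D" "j < D" "i \<noteq> j"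
    show "T $$ (i,j) = 0"
    proof (cases "j < i")
      case True then show ?thesis using ut ij T unfolding upper_triangular_def by auto
    next
      case False then have "i < j" using ij by auto
      then have "T $$ (j,i) = 0" using ut ij T unfolding upper_triangular_def by auto
      then show ?thesis using Tc[OF ij(1,2)] by simp
    qed
  qed
  define lam where "lam j = Re (T $$ (j,j))" for j
  define w where "w j = (\<Sum>k<n. (cmod (U $$ (k,j)))^2)" for j
  have colsum: "(\<Sum>k<D. (cmod (U $$ (k,j)))^2) = 1" if j: "j < D" for j
  proof -
    have "complex_of_real (\<Sum>k<D. (cmod (U $$ (k,j)))^2) = (mat_adjoint U * U) $$ (j,j)"
      using adj_mult_diag[OF U j] by simp
    also have "\<dots> = 1" using UU j by simp
    finally show ?thesis by (metis of_real_eq_1_iff)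
  qed
  have rowsum: "(\<Sum>j<D. (cmod (U $$ (k,j)))^2) = 1" if k: "k < D" for k
  proof -
    have "complex_of_real (\<Sum>j<D. (cmod (mat_adjoint U $$ (j,k)))^2) = (mat_adjoint (mat_adjoint U) * mat_adjoint U) $$ (k,k)"
      using adj_mult_diag[OF Ua k] by simp
    also have "\<dots> = 1" using UU k by simp
    also have "(\<Sum>j<D. (cmod (mat_adjoint U $$ (j,k)))^2) = (\<Sum>j<D. (cmod (U $$ (k,j)))^2)"
      by (rule sum.cong[OF refl]) (use U k in simp)
    finally show ?thesis by (metis of_real_eq_1_iff)
  qed
  have w01: "\<forall>j<D. 0 \<le> w j \<and> w j \<le> 1"
  proof (intro allI impI conjI)
    fix j assume j: "j < D"
    show "0 \<le> w j" unfolding w_def by (intro sum_nonneg) auto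
    have "w j \<le> (\<Sum>k<D. (cmod (U $$ (k,j)))^2)" unfolding w_def
      by (rule sum_mono2) (use n in auto)
    then show "w j \<le> 1" using colsum[OF j] by simp
  qed
  have wsum: "(\<Sum>j<D. w j) = real n"
  proof -
    have "(\<Sum>j<D. w j) = (\<Sum>k<n. \<Sum>j<D. (cmod (U $$ (k,j)))^2)"
      unfolding w_def by (rule sum.swap)
    also have "\<dots> = (\<Sum>k<n. 1)" by (rule sum.cong[OF refl]) (use rowsum n in auto)
    finally show ?thesis by simp
  qed
  have diagM: "Re (M $$ (k,k)) = (\<Sum>j<D. lam j * (cmod (U $$ (k,j)))^2)" if k: "k < D" for k
  proof -
    have "M $$ (k,k) = (\<Sum>j<D. T $$ (j,j) * complex_of_real ((cmod (U $$ (k,j)))^2))"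
      unfolding MT by (rule diag_conj_entry[OF U T Tdiag k])
    then show ?thesis unfolding lam_def by (simp add: Re_sum)
  qed
  have "(\<Sum>k<n. Re (M $$ (k,k))) = (\<Sum>k<n. \<Sum>j<D. lam j * (cmod (U $$ (k,j)))^2)"
    by (rule sum.cong[OF refl]) (use diagM n in auto)
  also have "\<dots> = (\<Sum>j<D. lam j * w j)"
    unfolding w_def by (subst sum.swap) (simp add: sum_distrib_left)
  finally have eq: "(\<Sum>k<n. Re (M $$ (k,k))) = (\<Sum>j<D. lam j * w j)" .
  have "eigenvalues_mset M = mset es"
    unfolding eigenvalues_mset_def es(1) by (rule proots_linear_prod)
  moreover have "es = map (\<lambda>j. T $$ (j,j)) [0..<D]" using dT T unfolding diag_mat_def by auto
  ultimately have im: "image_mset Re (eigenvalues_mset M) = mset (map lam [0..<D])"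
    unfolding lam_def by (simp add: multiset.map_comp comp_def)
  have "chi n M = sum_list (take n (sort (map lam [0..<D])))"
    unfolding chi_def im by (simp only: sorted_list_of_multiset_mset)
  also have "\<dots> \<le> (\<Sum>j<D. lam j * w j)" by (rule kyfan_weights[OF w01 wsum n])
  finally show ?thesis using eq by simp
qed



theorem lemma1:
  fixes D n :: nat and A B :: "complex mat" and \<mu> :: "nat \<Rightarrow> real"
  assumes "A \<in> carrier_mat D D" and "B \<in> carrier_mat D D"
    and "\<forall>i<D. 0 \<le> \<mu> i"
    and "\<forall>i j. i \<le> j \<longrightarrow> j < D \<longrightarrow> \<mu> i \<le> \<mu> j"
    and "1 \<le> n" and "n \<le> D"
  shows "let \<psi> = diagm D (\<lambda>i. complex_of_real (\<mu> i));
             \<psi>n = diagm D (\<lambda>i. if i < n then complex_of_real (\<mu> i) else 0)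
         in chi n (A * \<psi> * B * mat_adjoint B * mat_adjoint \<psi> * mat_adjoint A)
            \<le> Re (mtrace (A * \<psi>n * B * mat_adjoint B * mat_adjoint \<psi>n * mat_adjoint A))"
proof -
  note A = assms(1) and B = assms(2) and n = assms(5,6)
  define \<psi> where "\<psi> = diagm D (\<lambda>i. complex_of_real (\<mu> i))"
  define \<psi>n where "\<psi>n = diagm D (\<lambda>i. if i < n then complex_of_real (\<mu> i) else 0)"
  define M where "M = A * \<psi> * B * mat_adjoint B * mat_adjoint \<psi> * mat_adjoint A"
  define Mn where "Mn = A * \<psi>n * B * mat_adjoint B * mat_adjoint \<psi>n * mat_adjoint A"
  have \<psi>: "\<psi> \<in> carrier_mat D D" and \<psi>n: "\<psi>n \<in> carrier_mat D D" unfolding \<psi>_def \<psi>n_def by auto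
  have Aa: "mat_adjoint A \<in> carrier_mat D D" and Ba: "mat_adjoint B \<in> carrier_mat D D"
    and \<psi>a: "mat_adjoint \<psi> \<in> carrier_mat D D" and \<psi>na: "mat_adjoint \<psi>n \<in> carrier_mat D D"
    using A B \<psi> \<psi>n by auto
  note cm = mult_carrier_mat[of _ D D _ D] and am = assoc_mult_mat[of _ D D _ D _ D]
  define X where "X = A * \<psi> * B"
  define Xn where "Xn = A * \<psi>n * B"
  have X: "X \<in> carrier_mat D D" and Xn: "Xn \<in> carrier_mat D D"
    unfolding X_def Xn_def using A B \<psi> \<psi>n by (auto intro!: cm)
  have Xa: "mat_adjoint X \<in> carrier_mat D D" and Xna: "mat_adjoint Xn \<in> carrier_mat D D"
    using X Xn by auto
  have Xadj: "mat_adjoint X = mat_adjoint B * (mat_adjoint \<psi> * mat_adjoint A)"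
    unfolding X_def using A B \<psi>
    by (simp add: adjoint_mult[of _ D D _ D] am cm Aa Ba \<psi>a)
  have Xnadj: "mat_adjoint Xn = mat_adjoint B * (mat_adjoint \<psi>n * mat_adjoint A)"
    unfolding Xn_def using A B \<psi>n
    by (simp add: adjoint_mult[of _ D D _ D] am cm Aa Ba \<psi>na)
  have MX: "M = X * mat_adjoint X"
    unfolding M_def by (subst Xadj, unfold X_def) (use A B \<psi> Aa Ba \<psi>a in \<open>simp add: am cm\<close>)
  have MXn: "Mn = Xn * mat_adjoint Xn"
    unfolding Mn_def by (subst Xnadj, unfold Xn_def) (use A B \<psi>n Aa Ba \<psi>na in \<open>simp add: am cm\<close>)
  have Mc: "M \<in> carrier_mat D D" and Mnc: "Mn \<in> carrier_mat D D"
    unfolding MX MXn using X Xa Xn Xna by (auto intro!: cm)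
  define cs where "cs = map (\<lambda>j. row (mat_adjoint A) j) [n..<D]"
  have csc: "set cs \<subseteq> carrier_vec D" unfolding cs_def using Aa by auto
  have lcs: "length cs + n \<le> D" unfolding cs_def using n by simp
  have o0: "orthonormal []" unfolding orthonormal_def by simp
  obtain ws0 where ws0: "set ws0 \<subseteq> carrier_vec D" "orthonormal ws0" "length ws0 = n"
    "\<forall>c\<in>set cs. \<forall>u\<in>set ws0. c \<bullet> u = 0"
    using orthonormal_extend[of "[]" D cs n, OF _ o0 csc] lcs by auto
  obtain ws1 where ws1: "set ws1 \<subseteq> carrier_vec D" "orthonormal (ws0 @ ws1)" "length (ws0 @ ws1) = D"
    using orthonormal_extend[of ws0 D "[]" D, OF ws0(1) ws0(2)] ws0(3) n by auto
  define ws where "ws = ws0 @ ws1"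
  have ws: "set ws \<subseteq> carrier_vec D" "length ws = D" "orthonormal ws"
    unfolding ws_def using ws0 ws1 by auto
  define W where "W = mat_of_cols D ws"
  from unitary_of_orthonormal[OF ws, folded W_def]
  have WW: "mat_adjoint W * W = 1\<^sub>m D" "W * mat_adjoint W = 1\<^sub>m D" and W: "W \<in> carrier_mat D D" by auto
  have Wa: "mat_adjoint W \<in> carrier_mat D D" using W by auto
  have perp: "\<forall>j. n \<le> j \<longrightarrow> j < D \<longrightarrow> row (mat_adjoint A) j \<bullet> ws ! k = 0" if k: "k < n" for k
  proof (intro allI impI)
    fix j assume j: "n \<le> j" "j < D"
    have "row (mat_adjoint A) j \<in> set cs" unfolding cs_def using j by auto
    moreover have "ws ! k \<in> set ws0" unfolding ws_def using k ws0(3) by (simp add: nth_append)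
    ultimately show "row (mat_adjoint A) j \<bullet> ws ! k = 0" using ws0(4) by auto
  qed
  define Z where "Z = mat_adjoint X * W"
  define Zn where "Zn = mat_adjoint Xn * W"
  have Z: "Z \<in> carrier_mat D D" and Zn: "Zn \<in> carrier_mat D D"
    unfolding Z_def Zn_def using Xa Xna W by (auto intro!: cm)
  have Zeq: "Z $$ (l,k) = Zn $$ (l,k)" if k: "k < n" and l: "l < D" for k l
  proof -
    have kD: "k < D" using k n by simp
    have wk: "col W k = ws ! k" unfolding W_def using ws kD by (auto simp: nth_mem subsetD)
    have wkc: "ws ! k \<in> carrier_vec D" using ws kD by (auto simp: nth_mem subsetD)
    have "col Z k = col Zn k"
      unfolding Z_def Zn_def col_mult2[OF Xa W kD] col_mult2[OF Xna W kD] wk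
      unfolding X_def Xn_def \<psi>_def \<psi>n_def
      by (rule key_vec[OF A B wkc perp[OF k]])
    then have "col Z k $ l = col Zn k $ l" by simp
    then show ?thesis using Z Zn l kD by simp
  qed
  have ZZ: "mat_adjoint Z * Z = mat_adjoint W * M * W"
  proof -
    have "mat_adjoint Z = mat_adjoint W * X" unfolding Z_def using Xa W by (simp add: adjoint_mult[of _ D D _ D])
    then show ?thesis unfolding Z_def MX using X Xa W Wa by (simp add: am cm)
  qed
  have ZZn: "mat_adjoint Zn * Zn = mat_adjoint W * (Mn * W)"
  proof -
    have "mat_adjoint Zn = mat_adjoint W * Xn" unfolding Zn_def using Xna W by (simp add: adjoint_mult[of _ D D _ D])
    then show ?thesis unfolding Zn_def MXn using Xn Xna W Wa by (simp add: am cm)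
  qed
  have ZZc: "mat_adjoint Z * Z \<in> carrier_mat D D" using Z by (auto intro!: cm)
  have herm: "mat_adjoint (mat_adjoint Z * Z) = mat_adjoint Z * Z"
    using Z by (simp add: adjoint_mult[of _ D D _ D])
  have "similar_mat_wit (mat_adjoint Z * Z) M (mat_adjoint W) W"
    by (rule similar_mat_witI[OF WW(1) WW(2) ZZ ZZc Mc Wa W])
  then have "char_poly (mat_adjoint Z * Z) = char_poly M"
    by (intro char_poly_similar) (auto simp: similar_mat_def)
  then have chiM: "chi n M = chi n (mat_adjoint Z * Z)"
    unfolding chi_def eigenvalues_mset_def by simp
  have "chi n (mat_adjoint Z * Z) \<le> (\<Sum>k<n. Re ((mat_adjoint Z * Z) $$ (k,k)))"
    by (rule kyfan_diag[OF ZZc herm n])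
  also have "\<dots> = (\<Sum>k<n. \<Sum>l<D. (cmod (Zn $$ (l,k)))^2)"
  proof (rule sum.cong[OF refl])
    fix k assume k: "k \<in> {..<n}"
    then have kD: "k < D" using n by simp
    have "Re ((mat_adjoint Z * Z) $$ (k,k)) = (\<Sum>l<D. (cmod (Z $$ (l,k)))^2)"
      using adj_mult_diag[OF Z kD] by simp
    also have "\<dots> = (\<Sum>l<D. (cmod (Zn $$ (l,k)))^2)"
      by (rule sum.cong[OF refl]) (use Zeq k in auto)
    finally show "Re ((mat_adjoint Z * Z) $$ (k,k)) = (\<Sum>l<D. (cmod (Zn $$ (l,k)))^2)" .
  qed
  also have "\<dots> \<le> (\<Sum>k<D. \<Sum>l<D. (cmod (Zn $$ (l,k)))^2)"
    by (rule sum_mono2) (use n in \<open>auto intro: sum_nonneg\<close>)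
  also have "\<dots> = Re (mtrace (mat_adjoint Zn * Zn))"
  proof -
    have "mtrace (mat_adjoint Zn * Zn) = (\<Sum>k<D. (mat_adjoint Zn * Zn) $$ (k,k))"
      unfolding mtrace_def using Zn by simp
    also have "\<dots> = (\<Sum>k<D. complex_of_real (\<Sum>l<D. (cmod (Zn $$ (l,k)))^2))"
      by (rule sum.cong[OF refl]) (use adj_mult_diag[OF Zn] in auto)
    finally show ?thesis by (simp add: Re_sum)
  qed
  also have "mtrace (mat_adjoint Zn * Zn) = mtrace Mn"
  proof -
    have MnW: "Mn * W \<in> carrier_mat D D" using Mnc W by (auto intro!: cm)
    have "mtrace (mat_adjoint W * (Mn * W)) = mtrace ((Mn * W) * mat_adjoint W)"
      by (rule mtrace_comm[OF Wa MnW])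
    also have "(Mn * W) * mat_adjoint W = Mn" using Mnc W Wa WW by (simp add: am)
    finally show ?thesis unfolding ZZn .
  qed
  finally have "chi n M \<le> Re (mtrace Mn)" using chiM by simp
  then show ?thesis unfolding Let_def M_def Mn_def \<psi>_def \<psi>n_def .
qed

end
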